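(* $$\sum_{n\ge0}S_n(1,q)\frac{z^n}{n!}=\frac{1}{(1-\sin z)^q},$$ and for $n\ge1$, $$S_n(x,-1)=\begin{cases}(1-x)(1-2x)^{m-1},& n=2m,\\ -(1-2x)^m,& n=2m+1.\end{cases}$$
   Context: Permutations of $[n]=\{1,\dots,n\}$ are written in standard cycle decomposition (each cycle starts with its smallest element, cycles in increasing order of smallest elements). $\pi$ has an excedance at $i$ if $\pi(i)>i$; ${\rm exc}(\pi)$ is the number of excedances, ${\rm cyc}(\pi)$ the number of cycles. A value $x$ is a double excedance of $\pi$ if $\pi^{-1}(x)<x<\pi(x)$. A permutation $\pi$ of $[n]$ is a simsun permutation of the second kind if for every $k\in\{0,1,\dots,n\}$, deleting the $k$ largest letters from the cycle decomposition of $\pi$ yields a permutation with no double excedances; $\mathcal{SS}_n$ is the set of these, $S_n(x,q)=\sum_{\pi\in\mathcal{SS}_n}x^{{\rm exc}(\pi)}q^{{\rm cyc}(\pi)}$, and $S_0(x,q)=1$. *)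

theory Defs
  imports "HOL-Combinatorics.Permutations" "HOL-Computational_Algebra.Formal_Power_Series"
begin

text \<open>Permutations of [n] = {1..n} are functions nat => nat with p permutes {1..n}.\<close>

definition exc :: "(nat \<Rightarrow> nat) \<Rightarrow> nat \<Rightarrow> nat" where
  "exc p n = card {i \<in> {1..n}. p i > i}"

text \<open>Number of cycles (fixed points count as cycles) = number of orbits.\<close>
definition cyc :: "(nat \<Rightarrow> nat) \<Rightarrow> nat \<Rightarrow> nat" where
  "cyc p n = card ((\<lambda>i. {(p ^^ j) i | j. True}) ` {1..n})"

text \<open>Deleting all letters larger than m from the cycle decomposition of p:
  each remaining letter i is sent to the first letter <= m following it in its cycle.\<close>
definition del_letters :: "(nat \<Rightarrow> nat) \<Rightarrow> nat \<Rightarrow> nat \<Rightarrow> nat" where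
  "del_letters p m i = (p ^^ (LEAST j. 0 < j \<and> (p ^^ j) i \<le> m)) i"

definition no_double_exc :: "(nat \<Rightarrow> nat) \<Rightarrow> nat \<Rightarrow> bool" where
  "no_double_exc s m \<longleftrightarrow>
     \<not> (\<exists>x \<in> {1..m}. \<exists>y \<in> {1..m}. s y = x \<and> y < x \<and> x < s x)"

definition simsun2 :: "nat \<Rightarrow> (nat \<Rightarrow> nat) set" where
  "simsun2 n = {p. p permutes {1..n} \<and>
      (\<forall>k \<in> {0..n}. no_double_exc (del_letters p (n - k)) (n - k))}"

definition S_poly :: "nat \<Rightarrow> 'a::comm_ring_1 \<Rightarrow> 'a \<Rightarrow> 'a" where
  "S_poly n x q = (\<Sum>p \<in> simsun2 n. x ^ exc p n * q ^ cyc p n)"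

end

theory Submission
  imports Defs "HOL-Computational_Algebra.Polynomial" "HOL-Combinatorics.Orbits"
begin


lemma del_L1:
  assumes "p i \<le> m" shows "del_letters p m i = p i"
proof -
  have "(LEAST j. 0 < j \<and> (p ^^ j) i \<le> m) = 1"
    by (rule Least_equality) (use assms in auto)
  then show ?thesis by (simp add: del_letters_def)
qed

lemma del_L2:
  assumes "p i > m" "0 < j" "(p ^^ j) (p i) \<le> m"
  shows "del_letters p m i = del_letters p m (p i)"
proof -
  let ?Q = "\<lambda>j. 0 < j \<and> (p ^^ j) i \<le> m"
  let ?R = "\<lambda>j. 0 < j \<and> (p ^^ j) (p i) \<le> m"
  have eq: "\<forall>k. ?Q (Suc k) = ?R k"
    using assms(1) by (auto simp: funpow_Suc_right simp del: funpow.simps) (metis neq0_conv funpow_0 not_le)+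
  have "?Q (Suc j)" using assms by (simp add: funpow_Suc_right del: funpow.simps)
  then have L: "Least ?Q = Suc (Least ?R)"
    by (rule Least_Suc2[where Q = ?R]) (use assms eq in auto)
  show ?thesis unfolding del_letters_def L by (simp add: funpow_Suc_right del: funpow.simps)
qed


definition dl :: "nat \<Rightarrow> (nat \<Rightarrow> nat) \<Rightarrow> nat \<Rightarrow> nat" where
  "dl n p = (\<lambda>z. if z = Suc n then Suc n else if p z = Suc n then p (Suc n) else p z)"

lemma perm_facts:
  assumes "p permutes {1..Suc n}"
  shows "\<And>z. z \<notin> {1..Suc n} \<Longrightarrow> p z = z" "\<And>z. z \<in> {1..Suc n} \<Longrightarrow> p z \<in> {1..Suc n}"
    "inj p"
  using permutes_not_in[OF assms] permutes_in_image[OF assms] permutes_inj[OF assms] by metis+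

lemma dl_permutes:
  assumes p: "p permutes {1..Suc n}"
  shows "dl n p permutes {1..n}"
proof -
  note f = perm_facts[OF p]
  have inj: "inj p" by (rule f(3))
  have fix_out: "dl n p z = z" if "z \<notin> {1..n}" for z
  proof (cases "z = Suc n")
    case True then show ?thesis by (simp add: dl_def)
  next
    case False
    then have "z \<notin> {1..Suc n}" using that by auto
    then have "p z = z" using f(1) by blast
    then show ?thesis using False by (simp add: dl_def)
  qed
  have maps: "dl n p z \<in> {1..n}" if z: "z \<in> {1..n}" for z
  proof -
    have zN: "z \<noteq> Suc n" "z \<in> {1..Suc n}" using z by auto
    show ?thesis
    proof (cases "p z = Suc n")
      case True
      have "p (Suc n) \<noteq> Suc n" using True zN inj by (metis injD)
      moreover have "p (Suc n) \<in> {1..Suc n}" using f(2) by auto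
      ultimately show ?thesis using True zN by (auto simp: dl_def)
    next
      case False
      then show ?thesis using f(2)[OF zN(2)] zN by (auto simp: dl_def)
    qed
  qed
  have injon: "inj_on (dl n p) {1..n}"
  proof (rule inj_onI)
    fix a b assume a: "a \<in> {1..n}" and b: "b \<in> {1..n}" and e: "dl n p a = dl n p b"
    have aN: "a \<noteq> Suc n" "b \<noteq> Suc n" using a b by auto
    show "a = b"
    proof (cases "p a = Suc n"; cases "p b = Suc n")
      assume "p a = Suc n" "p b = Suc n" then show ?thesis using inj by (metis injD)
    next
      assume 1: "p a = Suc n" "p b \<noteq> Suc n"
      then have "p (Suc n) = p b" using e aN by (simp add: dl_def)
      then have "b = Suc n" using inj by (metis injD)
      then show ?thesis using aN by simp
    next
      assume 1: "p a \<noteq> Suc n" "p b = Suc n"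
      then have "p (Suc n) = p a" using e aN by (simp add: dl_def)
      then have "a = Suc n" using inj by (metis injD)
      then show ?thesis using aN by simp
    next
      assume 1: "p a \<noteq> Suc n" "p b \<noteq> Suc n"
      then have "p a = p b" using e aN by (simp add: dl_def)
      then show ?thesis using inj by (metis injD)
    qed
  qed
  have "dl n p ` {1..n} = {1..n}"
    by (rule endo_inj_surj) (use maps injon in auto)
  then show ?thesis
    using fix_out injon by (intro bij_imp_permutes) (auto simp: bij_betw_def)
qed


lemma funpow_Suc': "(f ^^ Suc k) x = (f ^^ k) (f x)"
  by (simp add: funpow_Suc_right del: funpow.simps)

lemma del_dl_claim:
  assumes p: "p permutes {1..Suc n}" and m: "m \<le> n"
  shows "\<forall>i. i \<in> {1..n} \<longrightarrow> 0 < j \<longrightarrow> (p ^^ j) i \<le> m \<longrightarrow>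
          (\<exists>j'>0. (dl n p ^^ j') i \<le> m) \<and> del_letters p m i = del_letters (dl n p) m i"
proof (induction j rule: less_induct)
  case (less j)
  note f = perm_facts[OF p]
  let ?P = "dl n p"
  show ?case
  proof (intro allI impI)
    fix i assume i: "i \<in> {1..n}" and j0: "0 < j" and jm: "(p ^^ j) i \<le> m"
    have iN: "i \<noteq> Suc n" "i \<in> {1..Suc n}" using i by auto
    show "(\<exists>j'>0. (?P ^^ j') i \<le> m) \<and> del_letters p m i = del_letters ?P m i"
    proof (cases "p i \<le> m")
      case True
      then have Pi: "?P i = p i" using iN m by (auto simp: dl_def)
      have "(?P ^^ 1) i \<le> m" using Pi True by simp
      moreover have "del_letters p m i = p i" by (rule del_L1[of p _ m, OF True])
      moreover have "del_letters ?P m i = p i" using del_L1[of ?P i m] Pi True by simp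
      ultimately show ?thesis by (metis zero_less_one)
    next
      case False
      then have pim: "p i > m" by simp
      obtain j1 where j1: "j = Suc j1" using j0 by (cases j) auto
      have j1m: "(p ^^ j1) (p i) \<le> m" using jm j1 funpow_Suc' by metis
      then have j10: "0 < j1" using pim by (cases j1) auto
      show ?thesis
      proof (cases "p i = Suc n")
        case False
        have pi: "p i \<in> {1..n}" using f(2)[OF iN(2)] False by auto
        have Pi: "?P i = p i" using iN False by (auto simp: dl_def)
        have IH: "(\<exists>j'>0. (?P ^^ j') (p i) \<le> m) \<and> del_letters p m (p i) = del_letters ?P m (p i)"
          using less.IH[of j1] j1 j10 pi j1m by blast
        then obtain j' where j': "0 < j'" "(?P ^^ j') (p i) \<le> m" by blast
        have "del_letters p m i = del_letters p m (p i)" by (rule del_L2[OF pim j10 j1m])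
        moreover have "del_letters ?P m i = del_letters ?P m (?P i)"
          by (rule del_L2) (use Pi pim j' in auto)
        moreover have "(?P ^^ Suc j') i \<le> m" using j' Pi funpow_Suc' by metis
        ultimately show ?thesis using IH Pi by (metis zero_less_Suc)
      next
        case True
        have d1: "del_letters p m i = del_letters p m (Suc n)"
          using del_L2[OF pim j10 j1m] True by simp
        have pN: "p (Suc n) \<noteq> Suc n" using True iN f(3) by (metis injD)
        have pNr: "p (Suc n) \<in> {1..n}" using f(2)[of "Suc n"] pN by auto
        have Pi: "?P i = p (Suc n)" using iN True by (auto simp: dl_def)
        show ?thesis
        proof (cases "p (Suc n) \<le> m")
          case True
          have "del_letters p m (Suc n) = p (Suc n)" by (rule del_L1[of p _ m, OF True])
          moreover have "del_letters ?P m i = p (Suc n)" using del_L1[of ?P i m] Pi True by simp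
          moreover have "(?P ^^ 1) i \<le> m" using Pi True by simp
          ultimately show ?thesis using d1 by (metis zero_less_one)
        next
          case False
          then have pNm: "p (Suc n) > m" by simp
          obtain j2 where j2: "j1 = Suc j2" using j10 by (cases j1) auto
          have j2m: "(p ^^ j2) (p (Suc n)) \<le> m" using j1m j2 True funpow_Suc' by metis
          then have j20: "0 < j2" using pNm by (cases j2) auto
          have IH: "(\<exists>j'>0. (?P ^^ j') (p (Suc n)) \<le> m) \<and>
                 del_letters p m (p (Suc n)) = del_letters ?P m (p (Suc n))"
            using less.IH[of j2] j1 j2 j20 pNr j2m by simp
          then obtain j' where j': "0 < j'" "(?P ^^ j') (p (Suc n)) \<le> m" by blast
          have "del_letters p m (Suc n) = del_letters p m (p (Suc n))" by (rule del_L2[OF pNm j20 j2m])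
          moreover have "del_letters ?P m i = del_letters ?P m (?P i)"
            by (rule del_L2) (use Pi pNm j' in auto)
          moreover have "(?P ^^ Suc j') i \<le> m" using j' Pi funpow_Suc' by metis
          ultimately show ?thesis using IH Pi d1 by (metis zero_less_Suc)
        qed
      qed
    qed
  qed
qed

lemma del_dl:
  assumes p: "p permutes {1..Suc n}" and m: "m \<le> n" and i: "i \<in> {1..m}"
  shows "del_letters p m i = del_letters (dl n p) m i"
proof -
  have "permutation p" using p unfolding permutation_permutes by blast
  then obtain k where k: "0 < k" "(p ^^ k) i = i" by (rule permutation_self)
  have "i \<in> {1..n}" using i m by simp
  moreover have "(p ^^ k) i \<le> m" using k i by simp
  ultimately have "(\<exists>j'>0. (dl n p ^^ j') i \<le> m) \<and> del_letters p m i = del_letters (dl n p) m i"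
    using del_dl_claim[OF p m, of k, rule_format] k(1) by blast
  then show ?thesis by (rule conjunct2)
qed


lemma ndx_cong:
  assumes "\<And>i. i \<in> {1..m} \<Longrightarrow> s i = t i"
  shows "no_double_exc s m = no_double_exc t m"
  unfolding no_double_exc_def using assms by (intro arg_cong[where f=Not] bex_cong refl) auto

lemma aux: "(\<forall>k \<in> {0..n}. P (n - k)) \<longleftrightarrow> (\<forall>m\<le>n. P m)" for P :: "nat \<Rightarrow> bool" and n :: nat
  proof
    assume a: "\<forall>k \<in> {0..n}. P (n - k)"
    show "\<forall>m\<le>n. P m"
    proof (intro allI impI)
      fix m assume "m \<le> n"
      then have "n - (n - m) = m" by simp
      then show "P m" using a[rule_format, of "n - m"] by simp
    qed
  next
    assume a: "\<forall>m\<le>n. P m"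
    show "\<forall>k \<in> {0..n}. P (n - k)" using a by simp
  qed
lemma simsun2_alt:
  "simsun2 n = {p. p permutes {1..n} \<and> (\<forall>m\<le>n. no_double_exc (del_letters p m) m)}"
  unfolding simsun2_def by (rule Collect_cong, rule conj_cong, rule refl, rule aux)

lemma del_top:
  assumes p: "p permutes {1..N}" and i: "i \<in> {1..N}"
  shows "del_letters p N i = p i"
proof -
  have "p i \<in> {1..N}" using permutes_in_image[OF p] i by blast
  then show ?thesis by (intro del_L1) simp
qed

lemma simsun2_Suc:
  "simsun2 (Suc n) = {p. p permutes {1..Suc n} \<and> no_double_exc p (Suc n) \<and> dl n p \<in> simsun2 n}"
proof (intro set_eqI iffI)
  fix p assume "p \<in> simsun2 (Suc n)"
  then have p: "p permutes {1..Suc n}" and a: "\<forall>m\<le>Suc n. no_double_exc (del_letters p m) m"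
    unfolding simsun2_alt by blast+
  have "no_double_exc (del_letters p (Suc n)) (Suc n)" using a by simp
  moreover have "no_double_exc (del_letters p (Suc n)) (Suc n) = no_double_exc p (Suc n)"
    by (rule ndx_cong) (rule del_top[OF p])
  ultimately have 1: "no_double_exc p (Suc n)" by simp
  have 2: "\<forall>m\<le>n. no_double_exc (del_letters (dl n p) m) m"
  proof (intro allI impI)
    fix m assume m: "m \<le> n"
    have "no_double_exc (del_letters p m) m" using a m by simp
    moreover have "no_double_exc (del_letters p m) m = no_double_exc (del_letters (dl n p) m) m"
      by (rule ndx_cong) (rule del_dl[OF p m])
    ultimately show "no_double_exc (del_letters (dl n p) m) m" by simp
  qed
  show "p \<in> {p. p permutes {1..Suc n} \<and> no_double_exc p (Suc n) \<and> dl n p \<in> simsun2 n}"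
    unfolding mem_Collect_eq using p 1 2 dl_permutes[OF p] unfolding simsun2_alt by blast
next
  fix p assume "p \<in> {p. p permutes {1..Suc n} \<and> no_double_exc p (Suc n) \<and> dl n p \<in> simsun2 n}"
  then have p: "p permutes {1..Suc n}" and 1: "no_double_exc p (Suc n)" and 2: "dl n p \<in> simsun2 n"
    by auto
  have a: "\<forall>m\<le>n. no_double_exc (del_letters (dl n p) m) m" using 2 unfolding simsun2_alt by blast
  have "\<forall>m\<le>Suc n. no_double_exc (del_letters p m) m"
  proof (intro allI impI)
    fix m assume m: "m \<le> Suc n"
    show "no_double_exc (del_letters p m) m"
    proof (cases "m = Suc n")
      case True
      have "no_double_exc (del_letters p (Suc n)) (Suc n) = no_double_exc p (Suc n)"
        by (rule ndx_cong) (rule del_top[OF p])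
      then show ?thesis using 1 True by simp
    next
      case False
      then have m': "m \<le> n" using m by simp
      have "no_double_exc (del_letters p m) m = no_double_exc (del_letters (dl n p) m) m"
        by (rule ndx_cong) (rule del_dl[OF p m'])
      then show ?thesis using a m' by simp
    qed
  qed
  then show "p \<in> simsun2 (Suc n)" using p unfolding simsun2_alt by blast
qed


definition ins :: "nat \<Rightarrow> nat \<Rightarrow> (nat \<Rightarrow> nat) \<Rightarrow> nat \<Rightarrow> nat" where
  "ins n i p = p \<circ> transpose i (Suc n)"

definition allowed :: "nat \<Rightarrow> (nat \<Rightarrow> nat) \<Rightarrow> nat set" where
  "allowed n p = {i \<in> {1..n}. \<not> (\<exists>y\<in>{1..n}. p y = i \<and> y < i)}"

lemma ins_apply:
  "ins n i p i = p (Suc n)" "ins n i p (Suc n) = p i"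
  "z \<noteq> i \<Longrightarrow> z \<noteq> Suc n \<Longrightarrow> ins n i p z = p z"
  by (auto simp: ins_def transpose_def)

lemma perm_n_facts:
  assumes p: "p permutes {1..n}"
  shows "p (Suc n) = Suc n" "\<And>z. z \<in> {1..n} \<Longrightarrow> p z \<in> {1..n}"
    "\<And>z. z \<notin> {1..n} \<Longrightarrow> p z = z" "inj p"
  using permutes_not_in[OF p] permutes_in_image[OF p] permutes_inj[OF p] by auto

lemma simsun2_ndx:
  assumes "p \<in> simsun2 n" shows "no_double_exc p n"
proof -
  have p: "p permutes {1..n}" and a: "\<forall>m\<le>n. no_double_exc (del_letters p m) m"
    using assms unfolding simsun2_alt by blast+
  have "no_double_exc (del_letters p n) n = no_double_exc p n"
    by (rule ndx_cong) (rule del_top[OF p])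
  then show ?thesis using a by simp
qed

lemma simsun2_perm: "p \<in> simsun2 n \<Longrightarrow> p permutes {1..n}"
  unfolding simsun2_def by blast

lemma fiber:
  assumes pp: "pp \<in> simsun2 n"
  shows "{p \<in> simsun2 (Suc n). dl n p = pp} = insert pp ((\<lambda>i. ins n i pp) ` allowed n pp)"
proof -
  have ppp: "pp permutes {1..n}" by (rule simsun2_perm[OF pp])
  note f = perm_n_facts[OF ppp]
  have ndx: "no_double_exc pp n" by (rule simsun2_ndx[OF pp])
  have ppS: "pp permutes {1..Suc n}" by (rule permutes_subset[OF ppp]) auto
  have dl_pp: "dl n pp = pp"
  proof
    fix z show "dl n pp z = pp z"
    proof (cases "z = Suc n")
      case True then show ?thesis using f(1) by (simp add: dl_def)
    next
      case False
      have "pp z \<noteq> Suc n"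
      proof (cases "z \<in> {1..n}")
        case True then show ?thesis using f(2)[OF True] by auto
      next
        case False then show ?thesis using f(3)[OF False] \<open>z \<noteq> Suc n\<close> by simp
      qed
      then show ?thesis using False by (simp add: dl_def)
    qed
  qed
  have ndx_pp: "no_double_exc pp (Suc n)"
    unfolding no_double_exc_def
  proof
    assume "\<exists>x\<in>{1..Suc n}. \<exists>y\<in>{1..Suc n}. pp y = x \<and> y < x \<and> x < pp x"
    then obtain x y where xy: "x\<in>{1..Suc n}" "y\<in>{1..Suc n}" "pp y = x" "y < x" "x < pp x" by blast
    have "x \<noteq> Suc n" using xy f(1) by auto
    moreover have "y \<noteq> Suc n" using xy f(1) by auto
    ultimately have "x \<in> {1..n}" "y \<in> {1..n}" using xy by auto
    then show False using ndx xy unfolding no_double_exc_def by blast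
  qed
  show ?thesis
  proof (intro equalityI subsetI)
    fix p assume "p \<in> {p \<in> simsun2 (Suc n). dl n p = pp}"
    then have pS: "p \<in> simsun2 (Suc n)" and dlp: "dl n p = pp" by auto
    have dlz: "\<And>z. pp z = dl n p z" using dlp by simp
    have pperm: "p permutes {1..Suc n}" and ndxp: "no_double_exc p (Suc n)"
      using pS unfolding simsun2_Suc by blast+
    note g = perm_facts[OF pperm]
    show "p \<in> insert pp ((\<lambda>i. ins n i pp) ` allowed n pp)"
    proof (cases "p (Suc n) = Suc n")
      case True
      have "p = pp"
      proof
        fix z show "p z = pp z"
        proof (cases "z = Suc n")
          case True
          have "pp z = dl n p z" by (rule dlz)
          also have "\<dots> = Suc n" using True by (simp add: dl_def)
          finally show ?thesis using \<open>p (Suc n) = Suc n\<close> True by simp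
        next
          case False
          then have "p z \<noteq> Suc n" using True g(3) by (metis injD)
          have "pp z = dl n p z" by (rule dlz)
          also have "\<dots> = p z" using False \<open>p z \<noteq> Suc n\<close> by (simp add: dl_def)
          finally show ?thesis by simp
        qed
      qed
      then show ?thesis by simp
    next
      case False
      obtain i where "Suc n = p i" using surjD[OF permutes_surj[OF pperm], of "Suc n"] by blast
      then have i: "p i = Suc n" by simp
      have iN: "i \<noteq> Suc n" using i False by auto
      have iS: "i \<in> {1..Suc n}"
      proof (rule ccontr)
        assume "i \<notin> {1..Suc n}"
        then have "p i = i" by (rule g(1))
        then show False using i iN by simp
      qed
      have iin: "i \<in> {1..n}" using iS iN by auto
      have eq: "p = ins n i pp"
      proof
        fix z show "p z = ins n i pp z"
        proof (cases "z = i")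
          case True
          have "ins n i pp z = pp (Suc n)" using True ins_apply(1) by simp
          also have "\<dots> = Suc n" by (rule f(1))
          finally show ?thesis using i True by simp
        next
          case zi: False
          show ?thesis
          proof (cases "z = Suc n")
            case True
            have "pp i = dl n p i" using dlp by simp
            also have "\<dots> = p (Suc n)" using i iN by (simp add: dl_def)
            finally show ?thesis using ins_apply(2) True by simp
          next
            case False
            have "p z \<noteq> Suc n" using i zi g(3) by (metis injD)
            have "pp z = dl n p z" by (rule dlz)
            also have "\<dots> = p z" using False \<open>p z \<noteq> Suc n\<close> by (simp add: dl_def)
            finally show ?thesis using ins_apply(3)[OF zi False] by simp
          qed
        qed
      qed
      have "i \<in> allowed n pp"
        unfolding allowed_def
      proof (intro CollectI conjI iin notI)
        assume "\<exists>y\<in>{1..n}. pp y = i \<and> y < i"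
        then obtain y where y: "y \<in> {1..n}" "pp y = i" "y < i" by blast
        have "y \<noteq> Suc n" using y by auto
        moreover have "p y \<noteq> Suc n" using y i g(3) by (metis injD less_irrefl)
        ultimately have "dl n p y = p y" by (simp add: dl_def)
        then have "p y = i" using y dlz[of y] by simp
        have "y \<in> {1..Suc n}" using y by auto
        moreover have "i < p i" using i iin by simp
        ultimately show False using ndxp y iS \<open>p y = i\<close> unfolding no_double_exc_def by blast
      qed
      then show ?thesis using eq by blast
    qed
  next
    fix p assume "p \<in> insert pp ((\<lambda>i. ins n i pp) ` allowed n pp)"
    then consider "p = pp" | i where "i \<in> allowed n pp" "p = ins n i pp" by blast
    then show "p \<in> {p \<in> simsun2 (Suc n). dl n p = pp}"
    proof cases
      case 1
      then show ?thesis using ppS ndx_pp dl_pp pp unfolding simsun2_Suc by simp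
    next
      case 2
      then have iin: "i \<in> {1..n}" and ia: "\<not> (\<exists>y\<in>{1..n}. pp y = i \<and> y < i)"
        unfolding allowed_def by blast+
      have pperm: "p permutes {1..Suc n}"
        unfolding 2(2) ins_def by (rule permutes_compose[OF permutes_swap_id ppS]) (use iin in auto)
      have v1: "p i = Suc n" and v2: "p (Suc n) = pp i" and v3: "\<And>z. z \<noteq> i \<Longrightarrow> z \<noteq> Suc n \<Longrightarrow> p z = pp z"
        using ins_apply[where n=n and i=i and p=pp] f(1) 2(2) by auto
      have ppi: "pp i \<in> {1..n}" using f(2)[OF iin] .
      have dlp: "dl n p = pp"
      proof
        fix z show "dl n p z = pp z"
        proof (cases "z = Suc n")
          case True then show ?thesis using f(1) by (simp add: dl_def)
        next
          case False
          show ?thesis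
          proof (cases "z = i")
            case True then show ?thesis using v1 v2 False by (simp add: dl_def)
          next
            case zi: False
            have "pp z \<noteq> Suc n" using f(2) f(3) False by (cases "z \<in> {1..n}") fastforce+
            then show ?thesis using v3[OF zi False] False by (simp add: dl_def)
          qed
        qed
      qed
      have ndxp: "no_double_exc p (Suc n)"
        unfolding no_double_exc_def
      proof
        assume "\<exists>x\<in>{1..Suc n}. \<exists>y\<in>{1..Suc n}. p y = x \<and> y < x \<and> x < p x"
        then obtain x y where xy: "x\<in>{1..Suc n}" "y\<in>{1..Suc n}" "p y = x" "y < x" "x < p x" by blast
        show False
        proof (cases "x = Suc n")
          case True then show False using xy v2 ppi by auto
        next
          case xN: False
          show False
          proof (cases "x = i")
            case True
            have "y \<noteq> i" using xy True by auto
            moreover have "y \<noteq> Suc n" using xy xN by auto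
            ultimately have "pp y = i" using v3 xy True by auto
            moreover have "y \<in> {1..n}" using xy \<open>y \<noteq> Suc n\<close> by auto
            ultimately show False using ia xy True by blast
          next
            case xi: False
            have px: "p x = pp x" using v3[OF xi xN] .
            have yi: "y \<noteq> i" using xy v1 xN by auto
            have yN: "y \<noteq> Suc n" using xy by auto
            have "pp y = x" using v3[OF yi yN] xy by simp
            moreover have "x \<in> {1..n}" "y \<in> {1..n}" using xy xN yN by auto
            moreover have "x < pp x" using xy(5) px by simp
            ultimately show False using ndx xy(4) unfolding no_double_exc_def by blast
          qed
        qed
      qed
      show ?thesis using pperm ndxp dlp pp unfolding simsun2_Suc by simp
    qed
  qed
qed


definition orb :: "(nat \<Rightarrow> nat) \<Rightarrow> nat \<Rightarrow> nat set" where
  "orb f x = {(f ^^ j) x | j. True}"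

lemma cyc_orb: "cyc p n = card (orb p ` {1..n})"
  unfolding cyc_def orb_def by simp

lemma orb_eq:
  assumes "permutation p" "y \<in> orb p x" shows "orb p y = orb p x"
proof -
  have o: "orb p z = orbit p z" for z using orbit_altdef_permutation[OF assms(1)] by (simp add: orb_def)
  have "cyclic_on p (orbit p x)" by (rule cyclic_on_orbit'[OF assms(1)])
  then show ?thesis using orbit_cyclic_eq3 assms(2) o by metis
qed

lemma R1:
  assumes p: "p permutes {1..Suc n}"
  shows "\<forall>z. z \<noteq> Suc n \<longrightarrow> (p ^^ j) z \<noteq> Suc n \<longrightarrow> (\<exists>j'. (dl n p ^^ j') z = (p ^^ j) z)"
proof (induction j rule: less_induct)
  case (less j)
  note g = perm_facts[OF p]
  show ?case
  proof (intro allI impI)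
    fix z assume z: "z \<noteq> Suc n" and y: "(p ^^ j) z \<noteq> Suc n"
    show "\<exists>j'. (dl n p ^^ j') z = (p ^^ j) z"
    proof (cases j)
      case 0 then show ?thesis by (metis funpow_0)
    next
      case (Suc j0)
      then have e: "(p ^^ j) z = (p ^^ j0) (p z)" using funpow_Suc' by metis
      show ?thesis
      proof (cases "p z = Suc n")
        case False
        then have "dl n p z = p z" using z by (simp add: dl_def)
        moreover obtain j' where "(dl n p ^^ j') (p z) = (p ^^ j0) (p z)"
          using less.IH[of j0] Suc False y e by auto
        ultimately have "(dl n p ^^ Suc j') z = (p ^^ j) z" using e funpow_Suc' by metis
        then show ?thesis by blast
      next
        case True
        then obtain j1 where j1: "j0 = Suc j1" using y e by (cases j0) auto
        then have e2: "(p ^^ j) z = (p ^^ j1) (p (Suc n))" using e True funpow_Suc' by metis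
        have pN: "p (Suc n) \<noteq> Suc n" using True z g(3) by (metis injD)
        have "dl n p z = p (Suc n)" using z True by (simp add: dl_def)
        moreover obtain j' where "(dl n p ^^ j') (p (Suc n)) = (p ^^ j1) (p (Suc n))"
          using less.IH[of j1] Suc j1 pN y e2 by auto
        ultimately have "(dl n p ^^ Suc j') z = (p ^^ j) z" using e2 funpow_Suc' by metis
        then show ?thesis by blast
      qed
    qed
  qed
qed

lemma R2:
  "\<forall>z. \<exists>j'. (p ^^ j') z = (dl n p ^^ j) z"
proof (induction j)
  case 0 then show ?case by (metis funpow_0)
next
  case (Suc j)
  show ?case
  proof
    fix z
    have step: "\<exists>k. (p ^^ k) z = dl n p z"
    proof (cases "z = Suc n")
      case True then show ?thesis by (metis funpow_0 dl_def)
    next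
      case False
      show ?thesis
      proof (cases "p z = Suc n")
        case True
        have "(p ^^ 2) z = dl n p z" using True False by (simp add: dl_def numeral_2_eq_2)
        then show ?thesis by blast
      next
        case F2: False
        have "(p ^^ 1) z = dl n p z" using F2 False by (simp add: dl_def)
        then show ?thesis by blast
      qed
    qed
    then obtain k where k: "(p ^^ k) z = dl n p z" by blast
    obtain j' where j': "(p ^^ j') (dl n p z) = (dl n p ^^ j) (dl n p z)" using Suc by blast
    have "(p ^^ (j' + k)) z = (dl n p ^^ Suc j) z"
      using j' k funpow_Suc' by (metis funpow_add comp_apply)
    then show "\<exists>j'. (p ^^ j') z = (dl n p ^^ Suc j) z" by blast
  qed
qed

lemma orb_dl:
  assumes p: "p permutes {1..Suc n}" and z: "z \<in> {1..n}"
  shows "orb p z - {Suc n} = orb (dl n p) z"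
proof (intro equalityI subsetI)
  fix y assume "y \<in> orb p z - {Suc n}"
  then obtain j where "y = (p ^^ j) z" "y \<noteq> Suc n" unfolding orb_def by blast
  moreover have "z \<noteq> Suc n" using z by auto
  ultimately obtain j' where "(dl n p ^^ j') z = y" using R1[OF p, of j] by auto
  then show "y \<in> orb (dl n p) z" unfolding orb_def by auto
next
  fix y assume "y \<in> orb (dl n p) z"
  then obtain j where j: "y = (dl n p ^^ j) z" unfolding orb_def by blast
  then have "y \<in> {1..n}" using permutes_in_funpow_image[OF dl_permutes[OF p] z] by simp
  moreover obtain j' where "(p ^^ j') z = y" using R2[where p=p and n=n and j=j] j by blast
  ultimately show "y \<in> orb p z - {Suc n}" unfolding orb_def by auto
qed

lemma cyc_del:
  assumes p: "p permutes {1..Suc n}" and pN: "p (Suc n) \<noteq> Suc n"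
  shows "cyc p (Suc n) = cyc (dl n p) n"
proof -
  note g = perm_facts[OF p]
  have perm: "permutation p" using p unfolding permutation_permutes by blast
  obtain i where "Suc n = p i" using surjD[OF permutes_surj[OF p], of "Suc n"] by blast
  then have i: "p i = Suc n" by simp
  have iN: "i \<noteq> Suc n" using i pN by auto
  have iS: "i \<in> {1..Suc n}"
  proof (rule ccontr)
    assume "i \<notin> {1..Suc n}"
    then have "p i = i" by (rule g(1))
    then show False using i iN by simp
  qed
  have iin: "i \<in> {1..n}" using iS iN by auto
  have "Suc n \<in> orb p i" unfolding orb_def by (rule CollectI, rule exI[of _ 1]) (use i in simp)
  then have oN: "orb p (Suc n) = orb p i" by (rule orb_eq[OF perm])
  have A: "orb p ` {1..Suc n} = orb p ` {1..n}"
  proof -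
    have "{1..Suc n} = insert (Suc n) {1..n}" by auto
    then have "orb p ` {1..Suc n} = insert (orb p i) (orb p ` {1..n})" using oN by simp
    moreover have "orb p i \<in> orb p ` {1..n}" using iin by blast
    ultimately show ?thesis by (simp add: insert_absorb)
  qed
  have inj: "inj_on (\<lambda>X. X - {Suc n}) (orb p ` {1..n})"
  proof (rule inj_onI)
    fix X Y assume X: "X \<in> orb p ` {1..n}" and Y: "Y \<in> orb p ` {1..n}" and e: "X - {Suc n} = Y - {Suc n}"
    from X obtain a where a: "a \<in> {1..n}" "X = orb p a" by (rule imageE) simp
    from Y obtain b where b: "b \<in> {1..n}" "Y = orb p b" by (rule imageE) simp
    have "a \<in> orb p a" unfolding orb_def by (rule CollectI, rule exI[of _ 0]) simp
    moreover have "a \<noteq> Suc n" using a(1) by simp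
    ultimately have "a \<in> X - {Suc n}" using a(2) by simp
    then have "a \<in> Y" using e by blast
    then have "a \<in> orb p b" using b(2) by simp
    then have "orb p a = orb p b" by (rule orb_eq[OF perm])
    then show "X = Y" using a(2) b(2) by simp
  qed
  have B: "(\<lambda>X. X - {Suc n}) ` orb p ` {1..n} = orb (dl n p) ` {1..n}"
    unfolding image_image using orb_dl[OF p] by (intro image_cong refl) simp
  have "cyc p (Suc n) = card (orb p ` {1..n})" unfolding cyc_orb A ..
  also have "\<dots> = card ((\<lambda>X. X - {Suc n}) ` orb p ` {1..n})" by (rule card_image[OF inj, symmetric])
  also have "\<dots> = cyc (dl n p) n" unfolding B cyc_orb ..
  finally show ?thesis .
qed


lemma exc_fix:
  assumes "pp permutes {1..n}" shows "exc pp (Suc n) = exc pp n"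
proof -
  have f: "pp (Suc n) = Suc n" using perm_n_facts(1)[OF assms] .
  have "{i \<in> {1..Suc n}. pp i > i} = {i \<in> {1..n}. pp i > i}"
  proof (intro equalityI subsetI)
    fix z assume z: "z \<in> {i \<in> {1..Suc n}. pp i > i}"
    then have "z \<noteq> Suc n" using f by auto
    then show "z \<in> {i \<in> {1..n}. pp i > i}" using z by simp
  qed simp
  then show ?thesis unfolding exc_def by simp
qed

lemma orb_fix: "f x = x \<Longrightarrow> orb f x = {x}"
proof -
  assume a: "f x = x"
  have fx: "(f ^^ j) x = x" for j by (induction j) (simp_all add: a)
  show ?thesis unfolding orb_def fx by simp
qed

lemma cyc_fix:
  assumes pp: "pp permutes {1..n}" shows "cyc pp (Suc n) = Suc (cyc pp n)"
proof -
  note f = perm_n_facts[OF pp]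
  have i: "{1..Suc n} = insert (Suc n) {1..n}" by auto
  have e: "orb pp ` {1..Suc n} = insert {Suc n} (orb pp ` {1..n})"
    unfolding i image_insert orb_fix[of pp "Suc n", OF f(1)] ..
  have "{Suc n} \<notin> orb pp ` {1..n}"
  proof
    assume "{Suc n} \<in> orb pp ` {1..n}"
    then obtain z where z: "z \<in> {1..n}" "{Suc n} = orb pp z" by blast
    have "z \<in> orb pp z" unfolding orb_def by (rule CollectI, rule exI[of _ 0]) simp
    then have "z = Suc n" using z(2) by blast
    then show False using z(1) by simp
  qed
  moreover have "finite (orb pp ` {1..n})" by simp
  ultimately show ?thesis unfolding cyc_orb e by (simp add: card_insert_disjoint)
qed

lemma ins_permutes:
  assumes pp: "pp permutes {1..n}" and i: "i \<in> {1..n}"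
  shows "ins n i pp permutes {1..Suc n}"
proof -
  have ppS: "pp permutes {1..Suc n}" by (rule permutes_subset[OF pp]) auto
  show ?thesis unfolding ins_def by (rule permutes_compose[OF permutes_swap_id ppS]) (use i in auto)
qed

lemma dl_ins:
  assumes pp: "pp permutes {1..n}" and iin: "i \<in> {1..n}"
  shows "dl n (ins n i pp) = pp"
proof
  note f = perm_n_facts[OF pp]
  let ?p = "ins n i pp"
  fix z show "dl n ?p z = pp z"
  proof (cases "z = Suc n")
    case True then show ?thesis using f(1) by (simp add: dl_def)
  next
    case False
    show ?thesis
    proof (cases "z = i")
      case True then show ?thesis using ins_apply[where n=n and i=i and p=pp] False f(1) by (simp add: dl_def)
    next
      case zi: False
      have "pp z \<noteq> Suc n" using f(2) f(3) False by (cases "z \<in> {1..n}") fastforce+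
      then show ?thesis using ins_apply(3)[OF zi False] False by (simp add: dl_def)
    qed
  qed
qed

lemma cyc_ins:
  assumes pp: "pp permutes {1..n}" and i: "i \<in> {1..n}"
  shows "cyc (ins n i pp) (Suc n) = cyc pp n"
proof -
  have "ins n i pp (Suc n) = pp i" by (rule ins_apply(2))
  moreover have "pp i \<in> {1..n}" using perm_n_facts(2)[OF pp i] .
  ultimately have "ins n i pp (Suc n) \<noteq> Suc n" by auto
  from cyc_del[OF ins_permutes[OF pp i] this] show ?thesis unfolding dl_ins[OF pp i] .
qed

lemma exc_ins:
  assumes pp: "pp permutes {1..n}" and i: "i \<in> {1..n}"
  shows "exc (ins n i pp) (Suc n) = exc pp n + (if i < pp i then 0 else 1)"
proof -
  note f = perm_n_facts[OF pp]
  let ?E = "{z \<in> {1..n}. pp z > z}"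
  have "{z \<in> {1..Suc n}. ins n i pp z > z} = insert i ?E"
  proof (intro equalityI subsetI)
    fix z assume z: "z \<in> {z \<in> {1..Suc n}. ins n i pp z > z}"
    show "z \<in> insert i ?E"
    proof (cases "z = i")
      case False
      have "z \<noteq> Suc n"
      proof
        assume zN: "z = Suc n"
        then have "ins n i pp z = pp i" using ins_apply(2) by simp
        then show False using z zN f(2)[OF i] by auto
      qed
      then show ?thesis using z ins_apply(3)[OF False] by auto
    qed simp
  next
    fix z assume z: "z \<in> insert i ?E"
    show "z \<in> {z \<in> {1..Suc n}. ins n i pp z > z}"
    proof (cases "z = i")
      case True then show ?thesis using i ins_apply(1)[of n i pp] f(1) by auto
    next
      case False
      then have "z \<in> ?E" using z by blast
      then have "z \<noteq> Suc n" by auto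
      then show ?thesis using \<open>z \<in> ?E\<close> ins_apply(3)[OF False] by auto
    qed
  qed
  then have "exc (ins n i pp) (Suc n) = card (insert i ?E)" unfolding exc_def by simp
  also have "\<dots> = card ?E + (if i < pp i then 0 else 1)"
    using i by (auto simp: card_insert_if)
  finally show ?thesis unfolding exc_def by simp
qed

lemma count_allowed:
  assumes pp: "pp \<in> simsun2 n"
  shows "{i \<in> allowed n pp. i < pp i} = {i \<in> {1..n}. i < pp i}"
    and "card (allowed n pp) + exc pp n = n"
proof -
  have ppp: "pp permutes {1..n}" by (rule simsun2_perm[OF pp])
  note f = perm_n_facts[OF ppp]
  have ndx: "no_double_exc pp n" by (rule simsun2_ndx[OF pp])
  let ?E = "{i \<in> {1..n}. i < pp i}"
  let ?NA = "{i \<in> {1..n}. \<exists>y\<in>{1..n}. pp y = i \<and> y < i}"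
  show 1: "{i \<in> allowed n pp. i < pp i} = ?E"
    using ndx unfolding allowed_def no_double_exc_def by blast
  have NA: "?NA = pp ` ?E"
  proof (intro equalityI subsetI)
    fix x assume "x \<in> ?NA" then show "x \<in> pp ` ?E" by auto
  next
    fix x assume "x \<in> pp ` ?E"
    then obtain y where y: "y \<in> ?E" "x = pp y" by blast
    then show "x \<in> ?NA" using f(2) by auto
  qed
  have cNA: "card ?NA = card ?E"
    unfolding NA by (rule card_image) (use f(4) in \<open>auto intro: inj_on_subset\<close>)
  have al: "allowed n pp = {1..n} - ?NA" unfolding allowed_def by blast
  have "card (allowed n pp) = n - card ?NA"
    unfolding al by (subst card_Diff_subset) auto
  moreover have "card ?NA \<le> n"
  proof -
    have "?NA \<subseteq> {1..n}" by blast
    then have "card ?NA \<le> card {1..n}" by (rule card_mono[rotated]) simp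
    then show ?thesis by simp
  qed
  ultimately show "card (allowed n pp) + exc pp n = n"
    using cNA unfolding exc_def by simp
qed


lemma D_monom: "[:0,1,-2:] = monom (1::'a::comm_ring_1) 1 + monom (-2) 2"
  by (simp add: poly_eq_iff coeff_pCons coeff_monom split: nat.split)

lemma D_mult: "e \<noteq> 0 \<Longrightarrow> [:0,1,-2:] * monom (a::'a::comm_ring_1) (e - 1) = monom a e - monom (2 * a) (Suc e)"
  unfolding D_monom by (cases e) (simp_all add: distrib_right mult_monom poly_eq_iff coeff_monom)

lemma lin_monom: "[:a, b:] * monom (c::'a::comm_ring_1) e = monom (a * c) e + monom (b * c) (Suc e)"
  by (simp add: mult_pCons_left smult_monom monom_Suc)

lemma pderiv_sum': "pderiv (sum f A) = (\<Sum>x\<in>A. pderiv (f x))"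
  by (induction A rule: infinite_finite_induct) (simp_all add: pderiv_add)

definition gp :: "complex \<Rightarrow> nat \<Rightarrow> complex poly" where
  "gp q n = (\<Sum>p\<in>simsun2 n. monom (q ^ cyc p n) (exc p n))"

lemma finite_simsun2: "finite (simsun2 n)"
proof -
  have "simsun2 n \<subseteq> {p. p permutes {1..n}}" unfolding simsun2_def by blast
  moreover have "finite {p. p permutes {1..n}}" by (rule finite_permutations) simp
  ultimately show ?thesis by (rule finite_subset)
qed

lemma fiber_sum:
  fixes q :: complex
  assumes pp: "pp \<in> simsun2 n"
  shows "(\<Sum>p\<in>{p\<in>simsun2 (Suc n). dl n p = pp}. monom (q ^ cyc p (Suc n)) (exc p (Suc n))) =
     [:q, of_nat n:] * monom (q ^ cyc pp n) (exc pp n) + [:0,1,-2:] * pderiv (monom (q ^ cyc pp n) (exc pp n))"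
proof -
  have ppp: "pp permutes {1..n}" by (rule simsun2_perm[OF pp])
  note f = perm_n_facts[OF ppp]
  define c where "c = q ^ cyc pp n"
  define e where "e = exc pp n"
  let ?A = "allowed n pp"
  have finA: "finite ?A" unfolding allowed_def by simp
  have Ain: "?A \<subseteq> {1..n}" unfolding allowed_def by blast
  have notin: "pp \<notin> (\<lambda>i. ins n i pp) ` ?A"
  proof
    assume "pp \<in> (\<lambda>i. ins n i pp) ` ?A"
    then obtain i where i: "i \<in> ?A" "pp = ins n i pp" by blast
    then have "pp (Suc n) = pp i" using ins_apply(2)[of n i pp] by simp
    then show False using f(1) f(2) i(1) Ain by force
  qed
  have inj: "inj_on (\<lambda>i. ins n i pp) ?A"
  proof (rule inj_onI)
    fix i j assume i: "i \<in> ?A" and j: "j \<in> ?A" and e: "ins n i pp = ins n j pp"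
    show "i = j"
    proof (rule ccontr)
      assume ij: "i \<noteq> j"
      have "ins n i pp i = Suc n" using ins_apply(1)[of n i pp] f(1) by simp
      moreover have "ins n j pp i = pp i" using ins_apply(3)[of i j n pp] ij i Ain by auto
      moreover have "pp i \<in> {1..n}" using f(2) i Ain by blast
      ultimately show False using e by auto
    qed
  qed
  have w: "\<And>i. i \<in> ?A \<Longrightarrow> monom (q ^ cyc (ins n i pp) (Suc n)) (exc (ins n i pp) (Suc n))
            = (if i < pp i then monom c e else monom c (Suc e))"
  proof -
    fix i assume "i \<in> ?A"
    then have i: "i \<in> {1..n}" using Ain by blast
    show "?thesis i" unfolding cyc_ins[OF ppp i] exc_ins[OF ppp i] c_def e_def by simp
  qed
  have "(\<Sum>p\<in>{p\<in>simsun2 (Suc n). dl n p = pp}. monom (q ^ cyc p (Suc n)) (exc p (Suc n)))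
     = monom (q ^ cyc pp (Suc n)) (exc pp (Suc n)) +
       (\<Sum>i\<in>?A. monom (q ^ cyc (ins n i pp) (Suc n)) (exc (ins n i pp) (Suc n)))"
    unfolding fiber[OF pp] using finA notin inj by (simp add: sum.reindex)
  also have "monom (q ^ cyc pp (Suc n)) (exc pp (Suc n)) = monom (q * c) e"
    unfolding cyc_fix[OF ppp] exc_fix[OF ppp] c_def e_def by simp
  also have "(\<Sum>i\<in>?A. monom (q ^ cyc (ins n i pp) (Suc n)) (exc (ins n i pp) (Suc n)))
      = (\<Sum>i\<in>?A. if i < pp i then monom c e else monom c (Suc e))"
    by (rule sum.cong[OF refl w])
  also have "\<dots> = (\<Sum>i\<in>?A \<inter> {i. i < pp i}. monom c e) + (\<Sum>i\<in>?A \<inter> - {i. i < pp i}. monom c (Suc e))"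
    by (rule sum.If_cases[OF finA])
  also have "\<dots> = monom (of_nat (card (?A \<inter> {i. i < pp i})) * c) e + monom (of_nat (card (?A \<inter> - {i. i < pp i})) * c) (Suc e)"
    by (simp add: monom_sum[symmetric] of_nat_monom mult_monom)
  finally have L: "(\<Sum>p\<in>{p\<in>simsun2 (Suc n). dl n p = pp}. monom (q ^ cyc p (Suc n)) (exc p (Suc n))) =
      monom (q * c) e + (monom (of_nat (card (?A \<inter> {i. i < pp i})) * c) e + monom (of_nat (card (?A \<inter> - {i. i < pp i})) * c) (Suc e))" .
  have c1: "card (?A \<inter> {i. i < pp i}) = e"
  proof -
    have "?A \<inter> {i. i < pp i} = {i \<in> ?A. i < pp i}" by blast
    then show ?thesis using count_allowed(1)[OF pp] unfolding e_def exc_def by (simp add: Collect_conj_eq)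
  qed
  have c2: "card (?A \<inter> - {i. i < pp i}) + e + e = n"
  proof -
    have "card ?A = card ((?A \<inter> {i. i < pp i}) \<union> (?A \<inter> - {i. i < pp i}))"
      by (rule arg_cong[where f=card]) blast
    also have "\<dots> = card (?A \<inter> {i. i < pp i}) + card (?A \<inter> - {i. i < pp i})"
      by (rule card_Un_disjoint) (use finA in auto)
    finally have "card ?A = card (?A \<inter> {i. i < pp i}) + card (?A \<inter> - {i. i < pp i})" .
    then show ?thesis using count_allowed(2)[OF pp] c1 unfolding e_def by simp
  qed
  then have c2': "(of_nat (card (?A \<inter> - {i. i < pp i})) :: complex) = of_nat n - 2 * of_nat e"
    by (metis add.assoc mult_2 of_nat_add add_diff_cancel_right')
  have R: "[:q, of_nat n:] * monom c e + [:0,1,-2:] * pderiv (monom c e)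
         = monom (q * c) e + monom (of_nat n * c) (Suc e) + (if e = 0 then 0 else monom (of_nat e * c) e - monom (2 * (of_nat e * c)) (Suc e))"
    unfolding lin_monom pderiv_monom using D_mult[of e "of_nat e * c"] by auto
  show ?thesis
    unfolding L R c1 c2' c_def[symmetric] e_def[symmetric]
    by (auto simp: poly_eq_iff algebra_simps)
qed

lemma gp_rec: "gp q (Suc n) = [:q, of_nat n:] * gp q n + [:0,1,-2:] * pderiv (gp q n)"
proof -
  have sub: "dl n ` simsun2 (Suc n) \<subseteq> simsun2 n" unfolding simsun2_Suc by blast
  have "gp q (Suc n) = (\<Sum>pp\<in>simsun2 n. \<Sum>p\<in>{p\<in>simsun2 (Suc n). dl n p = pp}. monom (q ^ cyc p (Suc n)) (exc p (Suc n)))"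
    unfolding gp_def by (rule sum.group[OF finite_simsun2 finite_simsun2 sub, symmetric])
  also have "\<dots> = (\<Sum>pp\<in>simsun2 n. [:q, of_nat n:] * monom (q ^ cyc pp n) (exc pp n) + [:0,1,-2:] * pderiv (monom (q ^ cyc pp n) (exc pp n)))"
    by (rule sum.cong[OF refl fiber_sum])
  also have "\<dots> = [:q, of_nat n:] * gp q n + [:0,1,-2:] * pderiv (gp q n)"
    unfolding gp_def by (simp add: sum.distrib sum_distrib_left pderiv_sum')
  finally show ?thesis .
qed

lemma simsun2_0: "simsun2 0 = {id}"
proof -
  have "simsun2 0 = {p. p permutes {}}"
    unfolding simsun2_def by (auto simp: no_double_exc_def)
  then show ?thesis by (simp add: permutes_empty)
qed

lemma gp_0: "gp q 0 = 1"
  unfolding gp_def simsun2_0 by (simp add: exc_def cyc_def monom_0 one_pCons)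

lemma poly_gp: "poly (gp q n) x = S_poly n x q"
  unfolding gp_def S_poly_def by (simp add: poly_sum poly_monom mult.commute)


lemma conv_step:
  fixes a b :: "nat \<Rightarrow> 'a::comm_ring_1"
  shows "(\<Sum>j\<le>n. of_nat (n choose j) * (a (Suc j) * b (n - j) + a j * b (Suc n - j))) =
         (\<Sum>j\<le>Suc n. of_nat (Suc n choose j) * (a j * b (Suc n - j)))"
proof -
  define g where "g j = of_nat (n choose j) * (a j * b (Suc n - j))" for j
  have g1: "(\<Sum>j\<le>n. g j) = g 0 + (\<Sum>j\<le>n. g (Suc j))"
  proof -
    have "(\<Sum>j\<le>Suc n. g j) = g 0 + (\<Sum>j\<le>n. g (Suc j))" by (rule sum.atMost_Suc_shift)
    moreover have "(\<Sum>j\<le>Suc n. g j) = (\<Sum>j\<le>n. g j)" by (simp add: g_def binomial_eq_0)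
    ultimately show ?thesis by simp
  qed
  have "(\<Sum>j\<le>n. of_nat (n choose j) * (a (Suc j) * b (n - j) + a j * b (Suc n - j)))
      = (\<Sum>j\<le>n. of_nat (n choose j) * (a (Suc j) * b (n - j))) + (\<Sum>j\<le>n. g j)"
    by (simp add: g_def distrib_left sum.distrib)
  also have "\<dots> = a 0 * b (Suc n) + (\<Sum>j\<le>n. (of_nat (n choose j) + of_nat (n choose Suc j)) * (a (Suc j) * b (n - j)))"
    unfolding g1 by (simp add: g_def distrib_right sum.distrib)
  also have "\<dots> = (\<Sum>j\<le>Suc n. of_nat (Suc n choose j) * (a j * b (Suc n - j)))"
    by (subst sum.atMost_Suc_shift) simp
  finally show ?thesis .
qed

abbreviation DD :: "complex poly" where "DD \<equiv> [:0,1,-2:]"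

lemma conv_deriv:
  fixes a b A B :: "nat \<Rightarrow> complex poly"
  assumes ha: "\<And>j. DD * pderiv (a j) = a (Suc j) - A j * a j"
    and hb: "\<And>k. DD * pderiv (b k) = b (Suc k) - B k * b k"
    and hK: "\<And>j. j \<le> n \<Longrightarrow> A j + B (n - j) = K"
  shows "DD * pderiv (\<Sum>j\<le>n. of_nat (n choose j) * (a j * b (n - j))) =
    (\<Sum>j\<le>Suc n. of_nat (Suc n choose j) * (a j * b (Suc n - j))) - K * (\<Sum>j\<le>n. of_nat (n choose j) * (a j * b (n - j)))"
proof -
  have t: "DD * pderiv (of_nat (n choose j) * (a j * b (n - j))) =
       of_nat (n choose j) * (a (Suc j) * b (n - j) + a j * b (Suc n - j)) - K * (of_nat (n choose j) * (a j * b (n - j)))"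
    if j: "j \<le> n" for j
  proof -
    have s: "Suc (n - j) = Suc n - j" using j by simp
    have "DD * pderiv (of_nat (n choose j) * (a j * b (n - j))) =
        of_nat (n choose j) * (a j * (DD * pderiv (b (n - j))) + b (n - j) * (DD * pderiv (a j)))"
      by (simp add: pderiv_mult algebra_simps)
    also have "\<dots> = of_nat (n choose j) * (a j * (b (Suc n - j) - B (n - j) * b (n - j)) + b (n - j) * (a (Suc j) - A j * a j))"
      unfolding ha hb s ..
    also have "\<dots> = of_nat (n choose j) * (a (Suc j) * b (n - j) + a j * b (Suc n - j)) - (A j + B (n - j)) * (of_nat (n choose j) * (a j * b (n - j)))"
      by (simp add: algebra_simps)
    finally show ?thesis unfolding hK[OF j] .
  qed
  have "DD * pderiv (\<Sum>j\<le>n. of_nat (n choose j) * (a j * b (n - j))) =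
      (\<Sum>j\<le>n. DD * pderiv (of_nat (n choose j) * (a j * b (n - j))))"
    by (simp add: pderiv_sum' sum_distrib_left)
  also have "\<dots> = (\<Sum>j\<le>n. of_nat (n choose j) * (a (Suc j) * b (n - j) + a j * b (Suc n - j)) - K * (of_nat (n choose j) * (a j * b (n - j))))"
    by (rule sum.cong[OF refl t]) simp
  also have "\<dots> = (\<Sum>j\<le>Suc n. of_nat (Suc n choose j) * (a j * b (Suc n - j))) - K * (\<Sum>j\<le>n. of_nat (n choose j) * (a j * b (n - j)))"
    by (simp add: sum_subtractf sum_distrib_left conv_step)
  finally show ?thesis .
qed

lemma pc_add: "[:0, a:] + [:q, b:] = [:q, a + b::complex:]"
  by simp

primrec rr :: "nat \<Rightarrow> complex poly" where
  "rr 0 = 1"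
| "rr (Suc n) = [:0, of_nat (Suc n):] * rr n + DD * pderiv (rr n)"

lemma rr_D: "DD * pderiv (rr j) = rr (Suc j) - [:0, of_nat (Suc j):] * rr j"
  by (simp only: rr.simps(2) add_diff_cancel_left')

lemma gp_D: "DD * pderiv (gp q k) = gp q (Suc k) - [:q, of_nat k:] * gp q k"
  by (subst gp_rec) (simp only: add_diff_cancel_left')

lemma c0_aux: "[:0, of_nat (Suc (Suc 0)):] * [:-1, 2:] + [:0,1,-2:] * pderiv [:-1, 2::complex:] = 0"
  by (simp add: pderiv_pCons)

lemma gen_ring:
  fixes X R1 P C c C' pC pc Dv :: "'a::comm_ring_1"
  assumes "2 * R1 = C + c" "2 * P = pC + pc" "Dv * pC = C' - X * C" "X * c + Dv * pc = 0"
  shows "2 * (X * R1 + Dv * P) = C'"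
proof -
  have "2 * (X * R1 + Dv * P) = X * (2 * R1) + Dv * (2 * P)" by (simp add: algebra_simps)
  also have "\<dots> = X * C + Dv * pC + (X * c + Dv * pc)" unfolding assms(1,2) by (simp add: algebra_simps)
  also have "\<dots> = C'" unfolding assms(3,4) by simp
  finally show ?thesis .
qed

lemma rr_riccati:
  "2 * rr (Suc n) = (\<Sum>j\<le>n. of_nat (n choose j) * (rr j * rr (n - j))) + (if n = 0 then [:-1, 2:] else 0)"
proof (induction n)
  case 0
  have "rr 1 = [:0, 1:]" by simp
  moreover have "2 * [:0, 1::complex:] = 1 + [:-1, 2:]" by (simp add: mult_2 one_pCons) (rule numeral_poly[symmetric])
  ultimately show ?case by simp
next
  case (Suc n)
  let ?C = "\<lambda>n. (\<Sum>j\<le>n. of_nat (n choose j) * (rr j * rr (n - j)))"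
  let ?c = "if n = 0 then [:-1, 2:] else (0::complex poly)"
  let ?X = "[:0, of_nat (Suc (Suc n)):] :: complex poly"
  have K: "[:0, of_nat (Suc j):] + [:0, of_nat (Suc (n - j)):] = ?X" if "j \<le> n" for j
  proof -
    have s: "Suc j + Suc (n - j) = Suc (Suc n)" using that by simp
    have "(of_nat (Suc j) :: complex) + of_nat (Suc (n - j)) = of_nat (Suc (Suc n))"
      by (simp only: of_nat_add[symmetric] s)
    then show ?thesis by (simp only: pc_add)
  qed
  have e: "DD * pderiv (?C n) = ?C (Suc n) - ?X * ?C n"
    by (rule conv_deriv[where A = "\<lambda>j. [:0, of_nat (Suc j):]" and B = "\<lambda>j. [:0, of_nat (Suc j):]"])
       (rule rr_D, rule rr_D, rule K)
  have c0: "?X * ?c + DD * pderiv ?c = 0"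
    using c0_aux by (cases "n = 0") simp_all
  have p2: "2 * pderiv (rr (Suc n)) = pderiv (?C n) + pderiv ?c"
  proof -
    have "2 * pderiv (rr (Suc n)) = pderiv (2 * rr (Suc n))" by (simp only: mult_2 pderiv_add)
    then show ?thesis unfolding Suc.IH pderiv_add .
  qed
  have s1: "rr (Suc (Suc n)) = ?X * rr (Suc n) + DD * pderiv (rr (Suc n))" by (rule rr.simps(2))
  have "2 * rr (Suc (Suc n)) = ?C (Suc n)"
    unfolding s1 by (rule gen_ring[OF Suc.IH p2 e c0])
  then show ?case by simp
qed

lemma gp_conv:
  "gp q (Suc n) = [:q:] * (\<Sum>j\<le>n. of_nat (n choose j) * (rr j * gp q (n - j)))"
proof (induction n)
  case 0 then show ?case by (simp add: gp_rec gp_0)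
next
  case (Suc n)
  let ?C = "\<lambda>n. (\<Sum>j\<le>n. of_nat (n choose j) * (rr j * gp q (n - j)))"
  have K: "[:0, of_nat (Suc j):] + [:q, of_nat (n - j):] = [:q, of_nat (Suc n):]" if "j \<le> n" for j
  proof -
    have s: "Suc j + (n - j) = Suc n" using that by simp
    have "(of_nat (Suc j) :: complex) + of_nat (n - j) = of_nat (Suc n)"
      by (simp only: of_nat_add[symmetric] s)
    then show ?thesis by (simp only: pc_add)
  qed
  have e: "DD * pderiv (?C n) = ?C (Suc n) - [:q, of_nat (Suc n):] * ?C n"
    by (rule conv_deriv[where A = "\<lambda>j. [:0, of_nat (Suc j):]" and B = "\<lambda>j. [:q, of_nat j:]"])
       (rule rr_D, rule gp_D, rule K)
  have "gp q (Suc (Suc n)) = [:q, of_nat (Suc n):] * gp q (Suc n) + DD * pderiv (gp q (Suc n))"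
    by (rule gp_rec)
  also have "\<dots> = [:q, of_nat (Suc n):] * ([:q:] * ?C n) + DD * pderiv ([:q:] * ?C n)"
    unfolding Suc.IH ..
  also have "\<dots> = [:q:] * ?C (Suc n)"
  proof -
    have pq: "pderiv ([:q:] * ?C n) = [:q:] * pderiv (?C n)" by (simp add: pderiv_mult pderiv_pCons pderiv_smult)
    have "DD * ([:q:] * pderiv (?C n)) = [:q:] * (DD * pderiv (?C n))" by (rule mult.left_commute)
    then have "DD * pderiv ([:q:] * ?C n) = [:q:] * (?C (Suc n) - [:q, of_nat (Suc n):] * ?C n)"
      unfolding pq e .
    moreover have gen: "\<And>X Q C C' :: complex poly. X * (Q * C) + Q * (C' - X * C) = Q * C'"
      by (simp add: algebra_simps)
    ultimately show ?thesis by (simp only: gen)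
  qed
  finally show ?case .
qed


definition EE :: "nat \<Rightarrow> complex poly" where
  "EE n = (if even n then (if n = 0 then 1 else [:1,-1:] * [:1,-2:] ^ (n div 2 - 1)) else - ([:1,-2:] ^ (n div 2)))"

lemma poly_pd: "poly (pderiv ([:1,-2:] ^ m)) x = - 2 * of_nat m * (1 - 2 * x :: complex) ^ (m - 1)"
  by (simp add: pderiv_power pderiv_pCons poly_power algebra_simps)

lemma poly_DD: "poly DD x = x - 2 * x^2"
  by (simp add: algebra_simps power2_eq_square)

lemma poly_lin: "poly [:a, b:] x = a + b * (x::complex)"
  by (simp add: algebra_simps)

lemma poly_P: "poly ([:1,-2:] ^ m) x = (1 - 2 * x :: complex) ^ m"
  by (simp add: poly_power algebra_simps)

lemma gp_m1: "gp (-1) n = EE n"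
proof (induction n)
  case 0 then show ?case by (simp add: gp_0 EE_def)
next
  case (Suc n)
  have rec: "gp (-1) (Suc n) = [:-1, of_nat n:] * EE n + DD * pderiv (EE n)"
    using gp_rec[of "-1" n] Suc.IH by simp
  show ?case
  proof (cases "even n")
    case True
    then obtain m where n: "n = 2 * m" by blast
    show ?thesis
    proof (cases m)
      case 0
      then show ?thesis using rec n by (simp add: EE_def one_pCons minus_pCons)
    next
      case (Suc k)
      have En: "EE n = [:1,-1:] * [:1,-2:] ^ k" using n Suc by (simp add: EE_def)
      have Es: "EE (Suc n) = - ([:1,-2:] ^ Suc k)" using n Suc by (simp add: EE_def)
      show ?thesis
        unfolding rec Es En poly_eq_poly_eq_iff[symmetric]
      proof
        fix x :: complex
        show "poly ([:-1, of_nat n:] * ([:1, -1:] * [:1, -2:] ^ k) + DD * pderiv ([:1, -1:] * [:1, -2:] ^ k)) x =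
              poly (- ([:1, -2:] ^ Suc k)) x"
        proof (cases k)
          case 0 then show ?thesis using n Suc by (simp add: pderiv_mult pderiv_pCons algebra_simps)
        next
          case (Suc k')
          define y where "y = (1 - 2 * x) ^ k'"
          have pk: "poly ([:1, -2:] ^ k) x = (1 - 2 * x) * y" unfolding poly_P y_def Suc by simp
          have pk1: "poly ([:1, -2:] ^ Suc k) x = (1 - 2 * x) * ((1 - 2 * x) * y)" unfolding poly_P y_def Suc by simp
          have pd: "poly (pderiv ([:1, -2:] ^ k)) x = - 2 * of_nat k * y" unfolding poly_pd y_def Suc by simp
          have nn: "(of_nat n :: complex) = 2 * of_nat k + 2" using n \<open>m = Suc k\<close> by simp
          have "poly ([:-1, of_nat n:] * ([:1, -1:] * [:1, -2:] ^ k) + DD * pderiv ([:1, -1:] * [:1, -2:] ^ k)) x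
             = (-1 + of_nat n * x) * ((1 - x) * ((1 - 2 * x) * y)) + (x - 2 * x^2) * ((1 - x) * (- 2 * of_nat k * y) + (1 - 2 * x) * y * (-1))"
            unfolding poly_add poly_mult pderiv_mult poly_DD poly_lin pk pd by (simp add: pderiv_pCons)
          also have "\<dots> = poly (- ([:1, -2:] ^ Suc k)) x"
            unfolding poly_minus pk1 nn by (simp add: algebra_simps power2_eq_square)
          finally show ?thesis .
        qed
      qed
    qed
  next
    case False
    then obtain m where n: "n = 2 * m + 1" using oddE by blast
    have En: "EE n = - ([:1,-2:] ^ m)" using n by (simp add: EE_def)
    have Es: "EE (Suc n) = [:1,-1:] * [:1,-2:] ^ m" using n by (simp add: EE_def)
    show ?thesis
      unfolding rec Es En poly_eq_poly_eq_iff[symmetric]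
    proof
      fix x :: complex
      show "poly ([:-1, of_nat n:] * (- ([:1, -2:] ^ m)) + DD * pderiv (- ([:1, -2:] ^ m))) x =
            poly ([:1, -1:] * [:1, -2:] ^ m) x"
      proof (cases m)
        case 0 then show ?thesis using n by (simp add: pderiv_minus)
      next
        case (Suc k')
        define y where "y = (1 - 2 * x) ^ k'"
        have pk: "poly ([:1, -2:] ^ m) x = (1 - 2 * x) * y" unfolding poly_P y_def Suc by simp
        have pd: "poly (pderiv ([:1, -2:] ^ m)) x = - 2 * of_nat m * y" unfolding poly_pd y_def Suc by simp
        have nn: "(of_nat n :: complex) = 2 * of_nat m + 1" using n by simp
        have "poly ([:-1, of_nat n:] * (- ([:1, -2:] ^ m)) + DD * pderiv (- ([:1, -2:] ^ m))) x
           = (-1 + of_nat n * x) * (- ((1 - 2 * x) * y)) + (x - 2 * x^2) * (- (- 2 * of_nat m * y))"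
          unfolding poly_add poly_mult pderiv_minus poly_minus poly_DD poly_lin pk pd by simp
        also have "\<dots> = poly ([:1, -1:] * [:1, -2:] ^ m) x"
          unfolding poly_mult pk nn by (simp add: algebra_simps power2_eq_square)
        finally show ?thesis .
      qed
    qed
  qed
qed

lemma partB_even:
  fixes x :: complex
  assumes "n \<ge> 1" "n = 2 * m"
  shows "S_poly n x (-1) = (1 - x) * (1 - 2 * x) ^ (m - 1)"
proof -
  have "S_poly n x (-1) = poly (EE n) x" unfolding poly_gp[symmetric] gp_m1 ..
  also have "\<dots> = (1 - x) * (1 - 2 * x) ^ (m - 1)" using assms by (simp add: EE_def poly_P algebra_simps)
  finally show ?thesis .
qed

lemma partB_odd:
  fixes x :: complex
  assumes "n = 2 * m + 1"
  shows "S_poly n x (-1) = - ((1 - 2 * x) ^ m)"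
proof -
  have "S_poly n x (-1) = poly (EE n) x" unfolding poly_gp[symmetric] gp_m1 ..
  also have "\<dots> = - ((1 - 2 * x) ^ m)" using assms by (simp add: EE_def poly_P algebra_simps)
  finally show ?thesis .
qed


unbundle fps_syntax

lemma ringW:
  fixes S C I h :: "'a::comm_ring_1"
  assumes a1: "I * (1 - S) = 1" and a2: "C * C + S * S = 1" and a3: "2 * h = 1"
  shows "- S * I + C * (C * (I * I)) = h * (C * I * (C * I) + 1)"
proof -
  have cc: "C * C = 1 - S * S" using a2 by (simp add: algebra_simps)
  have i1: "I = 1 + S * I" using a1 by (simp add: algebra_simps)
  have "(1 - S * S) * (I * I) = (1 + S) * (I * (1 - S)) * I" by (simp add: algebra_simps)
  also have "\<dots> = (1 + S) * I" by (simp only: a1 mult_1_right)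
  also have "\<dots> = I + S * I" by (simp add: algebra_simps)
  finally have k2: "(1 - S * S) * (I * I) = I + S * I" .
  have "- S * I + C * (C * (I * I)) = - S * I + (C * C) * (I * I)" by (simp add: algebra_simps)
  also have "\<dots> = I" unfolding cc k2 by simp
  also have "\<dots> = h * (2 * I)" using a3 by (simp add: algebra_simps)
  also have "2 * I = I + S * I + 1" using i1 by (simp add: algebra_simps)
  also have "I + S * I + 1 = (C * C) * (I * I) + 1" unfolding cc k2 ..
  also have "h * ((C * C) * (I * I) + 1) = h * (C * I * (C * I) + 1)" by (simp add: algebra_simps)
  finally show ?thesis .
qed
lemma ringF:
  fixes U Bg Q V F I C :: "'a::comm_ring_1"
  assumes a1: "U * Bg = Q * V" and a2: "F * V = 1" and a3: "I * U = 1"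
  shows "- (Bg * (- C)) * (F * F) = Q * (C * I * F)"
proof -
  have "Bg = (I * U) * Bg" using a3 by simp
  also have "\<dots> = I * (Q * V)" unfolding mult.assoc a1 ..
  finally have Bg: "Bg = I * (Q * V)" .
  have "- (Bg * (- C)) * (F * F) = Q * (C * I * F) * (F * V)" unfolding Bg by (simp add: algebra_simps)
  also have "\<dots> = Q * (C * I * F)" using a2 by simp
  finally show ?thesis .
qed

lemma conv_fps:
  fixes x y :: "nat \<Rightarrow> complex"
  shows "(Abs_fps (\<lambda>n. x n / fact n) * Abs_fps (\<lambda>n. y n / fact n)) $ n =
         (\<Sum>i\<le>n. of_nat (n choose i) * (x i * y (n - i))) / fact n"
proof -
  have "(Abs_fps (\<lambda>n. x n / fact n) * Abs_fps (\<lambda>n. y n / fact n)) $ n =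
        (\<Sum>i\<le>n. x i / fact i * (y (n - i) / fact (n - i)))"
    by (simp add: fps_mult_nth atLeast0AtMost)
  also have "\<dots> = (\<Sum>i\<le>n. of_nat (n choose i) * (x i * y (n - i)) / fact n)"
  proof (rule sum.cong[OF refl])
    fix i assume "i \<in> {..n}"
    then have i: "i \<le> n" by simp
    have "(of_nat (n choose i) :: complex) = fact n / (fact i * fact (n - i))"
      by (rule binomial_fact[OF i])
    then show "x i / fact i * (y (n - i) / fact (n - i)) = of_nat (n choose i) * (x i * y (n - i)) / fact n"
      by (simp add: field_simps)
  qed
  also have "\<dots> = (\<Sum>i\<le>n. of_nat (n choose i) * (x i * y (n - i))) / fact n"
    by (simp add: sum_divide_distrib)
  finally show ?thesis .
qed

lemma one_plus_nz: "1 + (of_nat n :: complex) \<noteq> 0"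
  by (metis of_nat_Suc of_nat_neq_0)

lemma dfact: "of_nat (Suc n) * (x / fact (Suc n)) = (x::complex) / fact n"
proof -
  have a: "(of_nat (Suc n)::complex) \<noteq> 0" by (rule of_nat_neq_0)
  have "of_nat (Suc n) * (x / fact (Suc n)) = of_nat (Suc n) * x / (of_nat (Suc n) * fact n)"
    by (simp only: fact_Suc times_divide_eq_right)
  also have "\<dots> = x / fact n" using a by (rule mult_divide_mult_cancel_left)
  finally show ?thesis .
qed

definition rho :: "nat \<Rightarrow> complex" where "rho n = poly (rr n) 1"

lemma rho_rec: "2 * rho (Suc n) = (\<Sum>j\<le>n. of_nat (n choose j) * (rho j * rho (n - j))) + (if n = 0 then 1 else 0)"
proof -
  have "poly (2 * rr (Suc n)) 1 = poly ((\<Sum>j\<le>n. of_nat (n choose j) * (rr j * rr (n - j))) + (if n = 0 then [:-1, 2:] else 0)) 1"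
    by (simp only: rr_riccati)
  then show ?thesis by (simp add: rho_def poly_sum del: rr.simps)
qed

lemma gamma_rec: "poly (gp q (Suc n)) 1 = q * (\<Sum>j\<le>n. of_nat (n choose j) * (rho j * poly (gp q (n - j)) 1))"
proof -
  have "poly (gp q (Suc n)) 1 = poly ([:q:] * (\<Sum>j\<le>n. of_nat (n choose j) * (rr j * gp q (n - j)))) 1"
    by (simp only: gp_conv)
  then show ?thesis by (simp add: rho_def poly_sum)
qed

definition Rf :: "complex fps" where "Rf = Abs_fps (\<lambda>n. rho n / fact n)"
definition Gf :: "complex \<Rightarrow> complex fps" where "Gf q = Abs_fps (\<lambda>n. poly (gp q n) 1 / fact n)"

lemma Rf_deriv: "fps_deriv Rf = fps_const (1/2) * (Rf * Rf + 1)"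
proof (rule fps_ext)
  fix n
  have l: "fps_deriv Rf $ n = rho (Suc n) / fact n"
    unfolding Rf_def fps_deriv_nth fps_nth_Abs_fps using dfact[of n] by simp
  have r: "(fps_const (1/2) * (Rf * Rf + 1)) $ n =
      1/2 * ((\<Sum>j\<le>n. of_nat (n choose j) * (rho j * rho (n - j))) / fact n + (if n = 0 then 1 else 0))"
    unfolding Rf_def by (simp add: conv_fps)
  have "rho (Suc n) = ((\<Sum>j\<le>n. of_nat (n choose j) * (rho j * rho (n - j))) + (if n = 0 then 1 else 0)) / 2"
    by (subst rho_rec[symmetric]) simp
  then show "fps_deriv Rf $ n = (fps_const (1/2) * (Rf * Rf + 1)) $ n"
    unfolding l r by (cases "n = 0") (simp_all add: field_simps)
qed

lemma Gf_deriv: "fps_deriv (Gf q) = fps_const q * (Rf * Gf q)"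
proof (rule fps_ext)
  fix n
  have l: "fps_deriv (Gf q) $ n = poly (gp q (Suc n)) 1 / fact n"
    unfolding Gf_def fps_deriv_nth fps_nth_Abs_fps using dfact[of n] by simp
  have r: "(fps_const q * (Rf * Gf q)) $ n =
      q * ((\<Sum>j\<le>n. of_nat (n choose j) * (rho j * poly (gp q (n - j)) 1)) / fact n)"
    unfolding Rf_def Gf_def by (simp add: conv_fps)
  show "fps_deriv (Gf q) $ n = (fps_const q * (Rf * Gf q)) $ n"
    unfolding l r gamma_rec by simp
qed

lemma ric_unique:
  fixes A B :: "complex fps"
  assumes dA: "fps_deriv A = fps_const c * (A * A + 1)" and dB: "fps_deriv B = fps_const c * (B * B + 1)"
    and z: "A $ 0 = B $ 0"
  shows "A = B"
proof -
  have "\<forall>k\<le>n. A $ k = B $ k" for n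
  proof (induction n)
    case 0 then show ?case using z by simp
  next
    case (Suc n)
    have "fps_deriv A $ n = fps_deriv B $ n"
      unfolding dA dB using Suc.IH by (simp add: fps_mult_nth)
    then have "A $ Suc n = B $ Suc n" using one_plus_nz[of n] by (simp add: fps_deriv_nth)
    then show ?case using Suc.IH le_Suc_eq by auto
  qed
  then show ?thesis by (intro fps_ext) blast
qed

lemma lin_unique:
  fixes A B P :: "complex fps"
  assumes dA: "fps_deriv A = P * A" and dB: "fps_deriv B = P * B" and z: "A $ 0 = B $ 0"
  shows "A = B"
proof -
  have "\<forall>k\<le>n. A $ k = B $ k" for n
  proof (induction n)
    case 0 then show ?case using z by simp
  next
    case (Suc n)
    have "fps_deriv A $ n = fps_deriv B $ n"
      unfolding dA dB using Suc.IH by (simp add: fps_mult_nth)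
    then have "A $ Suc n = B $ Suc n" using one_plus_nz[of n] by (simp add: fps_deriv_nth)
    then show ?case using Suc.IH le_Suc_eq by auto
  qed
  then show ?thesis by (intro fps_ext) blast
qed




lemma W_deriv:
  "fps_deriv (fps_cos 1 * inverse (1 - fps_sin (1::complex))) =
     fps_const (1/2) * ((fps_cos 1 * inverse (1 - fps_sin 1)) * (fps_cos 1 * inverse (1 - fps_sin 1)) + 1)"
proof -
  define U where "U = 1 - fps_sin (1::complex)"
  have U0: "U $ 0 \<noteq> 0" unfolding U_def by simp
  have IU: "inverse U * (1 - fps_sin 1) = 1" using inverse_mult_eq_1[OF U0] unfolding U_def .
  have dU: "fps_deriv U = - fps_cos 1" unfolding U_def by (simp add: fps_sin_deriv)
  have dI: "fps_deriv (inverse U) = fps_cos 1 * (inverse U * inverse U)"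
    using fps_inverse_deriv[OF U0] dU by (simp add: power2_eq_square)
  have dC: "fps_deriv (fps_cos (1::complex)) = - fps_sin 1" by (simp add: fps_cos_deriv fps_const_neg[symmetric])
  have dW: "fps_deriv (fps_cos 1 * inverse U) = - fps_sin 1 * inverse U + fps_cos 1 * (fps_cos 1 * (inverse U * inverse U))"
    unfolding fps_deriv_mult dC dI by (simp only: add.commute)
  have sc: "fps_cos 1 * fps_cos 1 + fps_sin 1 * fps_sin 1 = (1::complex fps)"
    using fps_sin_cos_sum_of_squares[of "1::complex"] by (simp add: power2_eq_square)
  have h: "2 * fps_const (1/2::complex) = 1" by (simp add: mult_2 fps_const_add[symmetric])
  have "fps_deriv (fps_cos 1 * inverse U) = fps_const (1/2) * ((fps_cos 1 * inverse U) * (fps_cos 1 * inverse U) + 1)"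
    unfolding dW by (rule ringW[OF IU sc h])
  then show ?thesis unfolding U_def .
qed

lemma F_deriv:
  fixes q :: complex
  shows "fps_deriv (inverse (fps_binomial q oo (- fps_sin 1))) =
    fps_const q * (fps_cos 1 * inverse (1 - fps_sin 1) * inverse (fps_binomial q oo (- fps_sin 1)))"
proof -
  define S where "S = fps_sin (1::complex)"
  define V where "V = fps_binomial q oo (- S)"
  have g0: "(- S) $ 0 = 0" unfolding S_def by simp
  have V0: "V $ 0 \<noteq> 0" unfolding V_def by simp
  have X0: "(1 + fps_X :: complex fps) $ 0 \<noteq> 0" by simp
  have H: "(1 + fps_X) * fps_deriv (fps_binomial q) = fps_const q * fps_binomial q"
  proof -
    have "(1 + fps_X) * fps_deriv (fps_binomial q) = fps_const q * fps_binomial q * (inverse (1 + fps_X) * (1 + fps_X))"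
      unfolding fps_binomial_deriv fps_divide_unit[OF X0] by (simp only: ac_simps)
    then show ?thesis using inverse_mult_eq_1[OF X0] by simp
  qed
  have H2: "(1 - S) * (fps_deriv (fps_binomial q) oo (- S)) = fps_const q * V"
  proof -
    have "((1 + fps_X) * fps_deriv (fps_binomial q)) oo (- S) = (fps_const q * fps_binomial q) oo (- S)"
      using H by simp
    then show ?thesis
      unfolding fps_compose_mult_distrib[OF g0] fps_compose_add_distrib fps_compose_1
        fps_X_fps_compose_startby0[OF g0] fps_const_compose V_def by simp
  qed
  have dV: "fps_deriv V = (fps_deriv (fps_binomial q) oo (- S)) * (- fps_cos 1)"
    unfolding V_def by (simp only: fps_compose_deriv[OF g0]) (simp add: S_def fps_sin_deriv)
  have FV: "inverse V * V = 1" by (rule inverse_mult_eq_1[OF V0])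
  have IU: "inverse (1 - S) * (1 - S) = 1" by (rule inverse_mult_eq_1) (simp add: S_def)
  have dF: "fps_deriv (inverse V) = - fps_deriv V * (inverse V * inverse V)"
    using fps_inverse_deriv[OF V0] by (simp add: power2_eq_square)
  have "fps_deriv (inverse V) = fps_const q * (fps_cos 1 * inverse (1 - S) * inverse V)"
    unfolding dF dV by (rule ringF[OF H2 FV IU])
  then show ?thesis unfolding V_def S_def .
qed

lemma partA:
  fixes q :: complex
  shows "Abs_fps (\<lambda>n. S_poly n 1 q / fact n) = inverse (fps_binomial q oo (- fps_sin 1))"
proof -
  let ?W = "fps_cos 1 * inverse (1 - fps_sin (1::complex))"
  let ?F = "inverse (fps_binomial q oo (- fps_sin 1))"
  have RW: "Rf = ?W"
  proof (rule ric_unique[OF Rf_deriv W_deriv])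
    show "Rf $ 0 = ?W $ 0" by (simp add: Rf_def rho_def)
  qed
  have "Gf q = ?F"
  proof (rule lin_unique[where P = "fps_const q * Rf"])
    show "fps_deriv (Gf q) = fps_const q * Rf * Gf q" using Gf_deriv by (simp add: mult.assoc)
    show "fps_deriv ?F = fps_const q * Rf * ?F" unfolding F_deriv RW by (simp add: mult.assoc)
    show "Gf q $ 0 = ?F $ 0" by (simp add: Gf_def gp_0)
  qed
  moreover have "Abs_fps (\<lambda>n. S_poly n 1 q / fact n) = Gf q"
    unfolding Gf_def poly_gp ..
  ultimately show ?thesis by simp
qed


theorem mainTheorem12:
  fixes q x :: complex
  shows "Abs_fps (\<lambda>n. S_poly n 1 q / fact n)
           = inverse (fps_binomial q oo (- fps_sin 1))
     \<and> (\<forall>n m. n \<ge> 1 \<longrightarrow> n = 2 * m \<longrightarrow>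
           S_poly n x (-1) = (1 - x) * (1 - 2 * x) ^ (m - 1))
     \<and> (\<forall>n m. n \<ge> 1 \<longrightarrow> n = 2 * m + 1 \<longrightarrow>
           S_poly n x (-1) = - ((1 - 2 * x) ^ m))"
  using partA[of q] partB_even[of _ _ x] partB_odd[of _ _ x] by blast

end
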